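(* Let $\Sigma$ and $\Delta$ be alphabets and $\varphi:\Delta\to 2^{\Sigma^*}$ a regular language substitution. (1) Let $\mathcal{R}_1=(K_1,\varphi)$ and $\mathcal{R}_2=(K_2,\varphi)$ be rational sets of regular languages with regular $K_1,K_2\subseteq\Delta^+$. Then $\mathcal{R}_1\cdot\mathcal{R}_2=\{L_1\cdot L_2\mid L_1\in\mathcal{R}_1,\ L_2\in\mathcal{R}_2\}$ is a rational set of regular languages of the form $(K',\varphi)$ for some regular $K'\subseteq\Delta^+$ (same substitution $\varphi$). If $\mathcal{R}_1$ and $\mathcal{R}_2$ are finite, then $\mathcal{R}_1\cdot\mathcal{R}_2$ is finite. (2) For every rational set of regular languages $\mathcal{R}$, the set $\mathcal{R}^\star=\bigcup_{i\in\mathbb{N}}\mathcal{R}^i$ is a rational set of regular languages. Moreover, $\mathcal{R}^\star$ is in general infinite even if $\mathcal{R}$ is finite: there exists a finite rational set of regular languages $\mathcal{R}$ for which $\mathcal{R}^\star$ is infinite.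
   Context: An alphabet is a nonempty finite set. A regular language substitution is a map $\varphi:\Delta\to 2^{\Sigma^*}$ such that each $\varphi(\delta)$ is a regular language over $\Sigma$. It is extended to words by $\varphi(\delta\cdot w)=\varphi(\delta)\cdot\varphi(w)$ and to languages $L$ by $\varphi(L)=\bigcup_{w\in L}\varphi(w)$. A set $\mathcal{R}$ of regular languages over $\Sigma$ is a rational set of regular languages (RSRL), written $\mathcal{R}=(K,\varphi)$, if there exist an alphabet $\Delta$, a regular language $K\subseteq\Delta^+$ and a regular language substitution $\varphi:\Delta\to2^{\Sigma^*}$ with $\mathcal{R}=\{\varphi(w)\mid w\in K\}$. Powers of sets of languages are defined by $\mathcal{R}^0=\{\{\varepsilon\}\}$ and $\mathcal{R}^{i+1}=\mathcal{R}^i\cdot\mathcal{R}$, with the product $\mathcal{R}_1\cdot\mathcal{R}_2=\{L_1L_2\mid L_1\in\mathcal{R}_1,L_2\in\mathcal{R}_2\}$. *)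

theory Defs
  imports Main
begin

definition conc :: "'a list set \<Rightarrow> 'a list set \<Rightarrow> 'a list set" where
  "conc A B = {u @ v | u v. u \<in> A \<and> v \<in> B}"

inductive_set kstar :: "'a list set \<Rightarrow> 'a list set" for A :: "'a list set" where
  kstar_Nil: "[] \<in> kstar A"
| kstar_app: "u \<in> A \<Longrightarrow> v \<in> kstar A \<Longrightarrow> u @ v \<in> kstar A"

inductive regular_on :: "'a set \<Rightarrow> 'a list set \<Rightarrow> bool" for S :: "'a set" where
  reg_empty: "regular_on S {}"
| reg_eps: "regular_on S {[]}"
| reg_letter: "a \<in> S \<Longrightarrow> regular_on S {[a]}"
| reg_union: "regular_on S A \<Longrightarrow> regular_on S B \<Longrightarrow> regular_on S (A \<union> B)"
| reg_conc: "regular_on S A \<Longrightarrow> regular_on S B \<Longrightarrow> regular_on S (conc A B)"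
| reg_star: "regular_on S A \<Longrightarrow> regular_on S (kstar A)"

fun subst_word :: "('d \<Rightarrow> 'a list set) \<Rightarrow> 'd list \<Rightarrow> 'a list set" where
  "subst_word \<phi> [] = {[]}"
| "subst_word \<phi> (d # w) = conc (\<phi> d) (subst_word \<phi> w)"

definition subst_lang :: "('d \<Rightarrow> 'a list set) \<Rightarrow> 'd list set \<Rightarrow> 'a list set" where
  "subst_lang \<phi> L = (\<Union>w\<in>L. subst_word \<phi> w)"

definition rsrl_of :: "'d list set \<Rightarrow> ('d \<Rightarrow> 'a list set) \<Rightarrow> 'a list set set" where
  "rsrl_of K \<phi> = {subst_word \<phi> w | w. w \<in> K}"

definition reg_subst_on :: "'d set \<Rightarrow> ('d \<Rightarrow> 'a list set) \<Rightarrow> bool" where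
  "reg_subst_on D \<phi> \<longleftrightarrow> (\<forall>d\<in>D. regular_on UNIV (\<phi> d))"

definition ctrl_lang :: "'d set \<Rightarrow> 'd list set \<Rightarrow> bool" where
  "ctrl_lang D K \<longleftrightarrow> K \<subseteq> lists D - {[]} \<and> regular_on D K"

text \<open>Rational set of regular languages: some (finite, nonempty) alphabet \<open>\<Delta>\<close>,
  encoded as a finite set of natural numbers, a regular \<open>K \<subseteq> \<Delta>\<^sup>+\<close>
  and a regular language substitution \<open>\<phi>\<close>.\<close>
definition is_rsrl :: "'a list set set \<Rightarrow> bool" where
  "is_rsrl R \<longleftrightarrow> (\<exists>(D::nat set) K \<phi>. finite D \<and> D \<noteq> {} \<and> ctrl_lang D K \<and>
       reg_subst_on D \<phi> \<and> R = rsrl_of K \<phi>)"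

definition lang_set_prod :: "'a list set set \<Rightarrow> 'a list set set \<Rightarrow> 'a list set set" where
  "lang_set_prod R1 R2 = {conc L1 L2 | L1 L2. L1 \<in> R1 \<and> L2 \<in> R2}"

primrec lang_set_pow :: "'a list set set \<Rightarrow> nat \<Rightarrow> 'a list set set" where
  "lang_set_pow R 0 = {{[]}}"
| "lang_set_pow R (Suc i) = lang_set_prod (lang_set_pow R i) R"

definition lang_set_star :: "'a list set set \<Rightarrow> 'a list set set" where
  "lang_set_star R = (\<Union>i. lang_set_pow R i)"

end

theory Submission
  imports Defs
begin

lemma conc_assoc: "conc (conc A B) C = conc A (conc B C)"
  unfolding conc_def by (auto, metis append.assoc, metis append.assoc)

lemma conc_eps_left[simp]: "conc {[]} X = X"
  unfolding conc_def by auto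

lemma conc_single[simp]: "conc {x} {y} = {x @ y}"
  unfolding conc_def by auto

lemma subst_word_append:
  "subst_word \<phi> (u @ v) = conc (subst_word \<phi> u) (subst_word \<phi> v)"
  by (induction u) (auto simp: conc_assoc)

lemma rsrl_conc:
  "rsrl_of (conc A B) \<phi> = lang_set_prod (rsrl_of A \<phi>) (rsrl_of B \<phi>)"
proof
  show "rsrl_of (conc A B) \<phi> \<subseteq> lang_set_prod (rsrl_of A \<phi>) (rsrl_of B \<phi>)"
  proof
    fix x assume "x \<in> rsrl_of (conc A B) \<phi>"
    then obtain u v where "u \<in> A" "v \<in> B" "x = subst_word \<phi> (u @ v)"
      unfolding rsrl_of_def conc_def by blast
    then show "x \<in> lang_set_prod (rsrl_of A \<phi>) (rsrl_of B \<phi>)"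
      unfolding lang_set_prod_def rsrl_of_def subst_word_append by blast
  qed
  show "lang_set_prod (rsrl_of A \<phi>) (rsrl_of B \<phi>) \<subseteq> rsrl_of (conc A B) \<phi>"
  proof
    fix x assume "x \<in> lang_set_prod (rsrl_of A \<phi>) (rsrl_of B \<phi>)"
    then obtain u v where "u \<in> A" "v \<in> B" "x = conc (subst_word \<phi> u) (subst_word \<phi> v)"
      unfolding lang_set_prod_def rsrl_of_def by blast
    moreover have "u @ v \<in> conc A B" using calculation unfolding conc_def by blast
    ultimately show "x \<in> rsrl_of (conc A B) \<phi>"
      unfolding rsrl_of_def subst_word_append[symmetric] by blast
  qed
qed

lemma regular_mono: "regular_on D K \<Longrightarrow> D \<subseteq> D' \<Longrightarrow> regular_on D' K"
  by (induction rule: regular_on.induct) (auto intro: regular_on.intros)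

lemma subst_word_agree:
  "w \<in> lists D \<Longrightarrow> (\<And>d. d \<in> D \<Longrightarrow> \<phi>' d = \<phi> d) \<Longrightarrow> subst_word \<phi>' w = subst_word \<phi> w"
  by (induction w) auto

primrec Kpow :: "'d list set \<Rightarrow> nat \<Rightarrow> 'd list set" where
  "Kpow K 0 = {[]}"
| "Kpow K (Suc i) = conc (Kpow K i) K"

lemma pow_rsrl: "lang_set_pow (rsrl_of K \<phi>) i = rsrl_of (Kpow K i) \<phi>"
proof (induction i)
  case 0 show ?case by (simp add: rsrl_of_def)
next
  case (Suc i) then show ?case by (simp only: lang_set_pow.simps Kpow.simps rsrl_conc)
qed

lemma kstar_snoc: "v \<in> kstar K \<Longrightarrow> u \<in> K \<Longrightarrow> v @ u \<in> kstar K"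
proof (induction rule: kstar.induct)
  case kstar_Nil then show ?case using kstar_app[OF _ kstar.kstar_Nil, of u K] by simp
next
  case (kstar_app u' v') then show ?case using kstar.kstar_app by fastforce
qed

lemma Kpow_kstar: "Kpow K i \<subseteq> kstar K"
  by (induction i) (auto simp: conc_def intro: kstar.intros kstar_snoc)

lemma Kpow_Suc_left: "Kpow K (Suc n) = conc K (Kpow K n)"
proof (induction n)
  case 0 show ?case by (simp add: conc_def)
next
  case (Suc n)
  have "Kpow K (Suc (Suc n)) = conc (conc K (Kpow K n)) K" using Suc by simp
  also have "\<dots> = conc K (Kpow K (Suc n))" by (simp add: conc_assoc)
  finally show ?case .
qed

lemma kstar_Kpow: "w \<in> kstar K \<Longrightarrow> \<exists>i. w \<in> Kpow K i"
proof (induction rule: kstar.induct)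
  case kstar_Nil show ?case by (rule exI[of _ 0]) simp
next
  case (kstar_app u v)
  then obtain i where "v \<in> Kpow K i" by blast
  with kstar_app have "u @ v \<in> conc K (Kpow K i)" unfolding conc_def by blast
  then have "u @ v \<in> Kpow K (Suc i)" by (simp only: Kpow_Suc_left)
  then show ?case by (rule exI)
qed

lemma star_rsrl: "lang_set_star (rsrl_of K \<phi>) = rsrl_of (kstar K) \<phi>"
proof -
  have "(\<Union>i. Kpow K i) = kstar K"
  proof
    show "(\<Union>i. Kpow K i) \<subseteq> kstar K" using Kpow_kstar by (rule UN_least)
    show "kstar K \<subseteq> (\<Union>i. Kpow K i)"
    proof
      fix w assume "w \<in> kstar K"
      then obtain i where "w \<in> Kpow K i" using kstar_Kpow by metis
      then show "w \<in> (\<Union>i. Kpow K i)" by (rule UN_I[OF UNIV_I])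
    qed
  qed
  moreover have "(\<Union>i. rsrl_of (Kpow K i) \<phi>) = rsrl_of (\<Union>i. Kpow K i) \<phi>"
    unfolding rsrl_of_def by blast
  ultimately show ?thesis
    unfolding lang_set_star_def pow_rsrl by simp
qed

lemma kstar_split: "kstar K = {[]} \<union> conc K (kstar K)"
proof
  show "kstar K \<subseteq> {[]} \<union> conc K (kstar K)"
  proof
    fix w assume "w \<in> kstar K"
    then show "w \<in> {[]} \<union> conc K (kstar K)"
      by cases (auto simp: conc_def)
  qed
  show "{[]} \<union> conc K (kstar K) \<subseteq> kstar K"
    by (auto simp: conc_def intro: kstar.intros)
qed

lemma kstar_lists: "w \<in> kstar K \<Longrightarrow> K \<subseteq> lists D \<Longrightarrow> w \<in> lists D"
  by (induction rule: kstar.induct) auto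

lemma star_is_rsrl:
  assumes "is_rsrl R" shows "is_rsrl (lang_set_star R)"
proof -
  obtain D :: "nat set" and K \<phi> where D: "finite D" "D \<noteq> {}" and c: "ctrl_lang D K"
    and s: "reg_subst_on D \<phi>" and R: "R = rsrl_of K \<phi>"
    using assms unfolding is_rsrl_def by blast
  define e where "e = Suc (Max D)"
  have eD: "e \<notin> D"
  proof
    assume "e \<in> D" then have "e \<le> Max D" using D(1) by simp
    then show False unfolding e_def by simp
  qed
  define D' where "D' = insert e D"
  define \<phi>' where "\<phi>' = \<phi>(e := {[]})"
  define K' where "K' = {[e]} \<union> conc K (kstar K)"
  have Kl: "K \<subseteq> lists D" and Kne: "[] \<notin> K" and Kr: "regular_on D K"
    using c unfolding ctrl_lang_def by auto
  have cl: "conc K (kstar K) \<subseteq> lists D - {[]}"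
  proof
    fix w assume "w \<in> conc K (kstar K)"
    then obtain u v where uv: "w = u @ v" "u \<in> K" "v \<in> kstar K" unfolding conc_def by blast
    then have "u \<in> lists D" "v \<in> lists D" "u \<noteq> []" using Kl Kne kstar_lists[of v K D] by auto
    then show "w \<in> lists D - {[]}" using uv by simp
  qed
  have "ctrl_lang D' K'"
    unfolding ctrl_lang_def K'_def D'_def
  proof
    show "{[e]} \<union> conc K (kstar K) \<subseteq> lists (insert e D) - {[]}" using cl by auto
    have "regular_on (insert e D) K" using Kr regular_mono by blast
    then show "regular_on (insert e D) ({[e]} \<union> conc K (kstar K))"
      by (intro regular_on.reg_union regular_on.reg_conc regular_on.reg_star regular_on.reg_letter) auto
  qed
  moreover have "reg_subst_on D' \<phi>'"
    using s unfolding reg_subst_on_def D'_def \<phi>'_def by (auto intro: regular_on.intros)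
  moreover have "lang_set_star R = rsrl_of K' \<phi>'"
  proof -
    have ag: "\<And>w. w \<in> conc K (kstar K) \<Longrightarrow> subst_word \<phi>' w = subst_word \<phi> w"
      using cl eD by (intro subst_word_agree[of _ D]) (auto simp: \<phi>'_def)
    have un: "rsrl_of (A \<union> B) f = rsrl_of A f \<union> rsrl_of B f" for A B and f :: "nat \<Rightarrow> 'a list set"
      unfolding rsrl_of_def by blast
    have e1: "rsrl_of {[]} \<phi> = {{[]}}" unfolding rsrl_of_def by simp
    have e2: "rsrl_of {[e]} \<phi>' = {{[]}}" unfolding rsrl_of_def by (simp add: \<phi>'_def)
    have e3: "rsrl_of (conc K (kstar K)) \<phi> = rsrl_of (conc K (kstar K)) \<phi>'"
      unfolding rsrl_of_def using ag by force
    have "lang_set_star R = rsrl_of ({[]} \<union> conc K (kstar K)) \<phi>"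
      unfolding R star_rsrl by (subst kstar_split) simp
    also have "\<dots> = rsrl_of K' \<phi>'"
      unfolding K'_def un e1 e2 e3 ..
    finally show ?thesis .
  qed
  ultimately show ?thesis unfolding is_rsrl_def D'_def using D by blast
qed

lemma part1:
  assumes "ctrl_lang UNIV K1" "ctrl_lang UNIV K2"
  shows "(\<exists>K'. ctrl_lang UNIV K' \<and>
                lang_set_prod (rsrl_of K1 \<phi>) (rsrl_of K2 \<phi>) = rsrl_of K' \<phi>) \<and>
            (finite (rsrl_of K1 \<phi>) \<longrightarrow> finite (rsrl_of K2 \<phi>) \<longrightarrow>
                finite (lang_set_prod (rsrl_of K1 \<phi>) (rsrl_of K2 \<phi>)))"
proof
  have "ctrl_lang UNIV (conc K1 K2)"
    using assms unfolding ctrl_lang_def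
    by (auto intro: regular_on.reg_conc) (auto simp: conc_def)
  then show "\<exists>K'. ctrl_lang UNIV K' \<and>
                lang_set_prod (rsrl_of K1 \<phi>) (rsrl_of K2 \<phi>) = rsrl_of K' \<phi>"
    using rsrl_conc by metis
  have eq: "lang_set_prod A B = (\<lambda>(x,y). conc x y) ` (A \<times> B)" for A B :: "'x list set set"
    unfolding lang_set_prod_def by auto
  show "finite (rsrl_of K1 \<phi>) \<longrightarrow> finite (rsrl_of K2 \<phi>) \<longrightarrow>
                finite (lang_set_prod (rsrl_of K1 \<phi>) (rsrl_of K2 \<phi>))"
    unfolding eq by auto
qed

lemma part3: "\<exists>R :: 'a list set set. is_rsrl R \<and> finite R \<and> infinite (lang_set_star R)"
proof -
  fix a :: 'a
  define R where "R = {{[a]}}"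
  have "is_rsrl R"
    unfolding is_rsrl_def
  proof (intro exI conjI)
    show "finite {0::nat}" "{0::nat} \<noteq> {}" by auto
    show "ctrl_lang {0::nat} {[0]}" unfolding ctrl_lang_def by (auto intro: regular_on.intros)
    show "reg_subst_on {0::nat} (\<lambda>_. {[a]})" unfolding reg_subst_on_def
      by (auto intro: regular_on.intros)
    show "R = rsrl_of {[0::nat]} (\<lambda>_. {[a]})" unfolding R_def rsrl_of_def conc_def by auto
  qed
  have pw: "lang_set_pow R i = {{replicate i a}}" for i
    by (induction i) (auto simp: R_def lang_set_prod_def replicate_append_same)
  have st: "lang_set_star R = range (\<lambda>i. {replicate i a})"
    unfolding lang_set_star_def pw by auto
  have ij: "inj (\<lambda>i. {replicate i a})"
    by (rule injI) (metis length_replicate singleton_inject)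
  have fR: "finite R" unfolding R_def by simp
  have "infinite (range (\<lambda>i::nat. {replicate i a}))"
    using finite_imageD[of "\<lambda>i::nat. {replicate i a}" UNIV] ij by auto
  then show ?thesis using fR st \<open>is_rsrl R\<close> by auto
qed

theorem proposition1:
  fixes \<phi> :: "'d::finite \<Rightarrow> 'a::finite list set"
  assumes "reg_subst_on (UNIV :: 'd set) \<phi>"
  shows "(\<forall>K1 K2. ctrl_lang UNIV K1 \<longrightarrow> ctrl_lang UNIV K2 \<longrightarrow>
            (\<exists>K'. ctrl_lang UNIV K' \<and>
                lang_set_prod (rsrl_of K1 \<phi>) (rsrl_of K2 \<phi>) = rsrl_of K' \<phi>) \<and>
            (finite (rsrl_of K1 \<phi>) \<longrightarrow> finite (rsrl_of K2 \<phi>) \<longrightarrow>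
                finite (lang_set_prod (rsrl_of K1 \<phi>) (rsrl_of K2 \<phi>))))
       \<and> (\<forall>R :: 'a list set set. is_rsrl R \<longrightarrow> is_rsrl (lang_set_star R))
       \<and> (\<exists>R :: 'a list set set. is_rsrl R \<and> finite R \<and> infinite (lang_set_star R))"
  using part1 star_is_rsrl part3 by blast

end
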